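(* Let $(X,T)$ be a topological dynamical system and let $\mathcal{F}=\{f_n\}_{n\ge1}$ and $\Phi=\{\varphi_n\}_{n\ge1}$ be two asymptotically additive potentials on $X$. Let $\mu^*\in\mathcal{E}_T$ be any ergodic measure with $\mathcal{F}_*(\mu^* )=\beta(\mathcal{F})$ (such a measure exists) and set $\alpha^*=\Phi_*(\mu^* )$. Then $\Lambda_{\mathcal{F}\mid\Phi}$ is monotone nondecreasing on $[\eta(\Phi),\alpha^*]$ and monotone nonincreasing on $[\alpha^*,\beta(\Phi)]$.
   Context: $X$ is a compact metric space and $T:X\to X$ is continuous. $\mathcal{M}_T$ denotes the set of $T$-invariant Borel probability measures on $X$ (with the weak$^*$ topology) and $\mathcal{E}_T$ the set of ergodic ones. For $f\in C(X)$, $S_nf=\sum_{i=0}^{n-1}f\circ T^i$. A sequence $\mathcal{F}=\{f_n\}_{n\ge1}\subset C(X)$ is an asymptotically additive potential (AAP) if for every $\xi>0$ there is $f_\xi\in C(X)$ with $\limsup_{n\to\infty}\frac1n\|f_n-S_nf_\xi\|_\infty<\xi$. For $\mu\in\mathcal{M}_T$ the limit $\mathcal{F}_*(\mu)=\lim_{n\to\infty}\frac1n\int f_n\,d\mu$ exists and is finite, and $\mu\mapsto\mathcal{F}_*(\mu)$ is continuous and affine on $\mathcal{M}_T$. Define $\beta(\mathcal{F})=\max\{\mathcal{F}_*(\mu):\mu\in\mathcal{M}_T\}$, $\eta(\Phi)=\min\{\Phi_*(\mu):\mu\in\mathcal{M}_T\}$, $\mathcal{M}_T(\Phi,\alpha)=\{\mu\in\mathcal{M}_T:\Phi_*(\mu)=\alpha\}$,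 and $\Lambda_{\mathcal{F}\mid\Phi}(\alpha)=\sup\{\mathcal{F}_*(\mu):\mu\in\mathcal{M}_T(\Phi,\alpha)\}$. *)

theory Defs
  imports "HOL-Analysis.Analysis" "HOL-Probability.Probability" "HOL-Library.Liminf_Limsup"
begin

text \<open>The phase space X is the (whole) type 'a, a metric space assumed compact.
  Borel probability measures on X are measures M with sets M = sets borel.\<close>

definition invariant_measures :: "('a::metric_space \<Rightarrow> 'a) \<Rightarrow> 'a measure set" where
  "invariant_measures T = {M. sets M = sets borel \<and> prob_space M \<and>
      (\<forall>A \<in> sets borel. emeasure M (T -` A) = emeasure M A)}"

definition ergodic_measures :: "('a::metric_space \<Rightarrow> 'a) \<Rightarrow> 'a measure set" where
  "ergodic_measures T = {M \<in> invariant_measures T.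
      \<forall>A \<in> sets borel. T -` A = A \<longrightarrow> measure M A = 0 \<or> measure M A = 1}"

definition birkhoff_sum :: "('a \<Rightarrow> 'a) \<Rightarrow> nat \<Rightarrow> ('a \<Rightarrow> real) \<Rightarrow> 'a \<Rightarrow> real" where
  "birkhoff_sum T n f x = (\<Sum>i<n. f ((T ^^ i) x))"

definition sup_norm :: "('a \<Rightarrow> real) \<Rightarrow> real" where
  "sup_norm g = (SUP x. \<bar>g x\<bar>)"

text \<open>Asymptotically additive potential; the sequence is indexed by n \<ge> 1 (the value at 0 is irrelevant).\<close>
definition AAP :: "('a::metric_space \<Rightarrow> 'a) \<Rightarrow> (nat \<Rightarrow> 'a \<Rightarrow> real) \<Rightarrow> bool" where
  "AAP T F \<longleftrightarrow> (\<forall>n\<ge>1. continuous_on UNIV (F n)) \<and>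
     (\<forall>\<xi>>0. \<exists>g. continuous_on UNIV g \<and>
        limsup (\<lambda>n. ereal (sup_norm (\<lambda>x. F n x - birkhoff_sum T n g x) / real n)) < ereal \<xi>)"

definition Fstar :: "(nat \<Rightarrow> 'a \<Rightarrow> real) \<Rightarrow> 'a measure \<Rightarrow> real" where
  "Fstar F M = lim (\<lambda>n. (\<integral>x. F n x \<partial>M) / real n)"

definition beta :: "('a::metric_space \<Rightarrow> 'a) \<Rightarrow> (nat \<Rightarrow> 'a \<Rightarrow> real) \<Rightarrow> real" where
  "beta T F = (SUP M \<in> invariant_measures T. Fstar F M)"

definition eta :: "('a::metric_space \<Rightarrow> 'a) \<Rightarrow> (nat \<Rightarrow> 'a \<Rightarrow> real) \<Rightarrow> real" where
  "eta T F = (INF M \<in> invariant_measures T. Fstar F M)"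

definition level_measures :: "('a::metric_space \<Rightarrow> 'a) \<Rightarrow> (nat \<Rightarrow> 'a \<Rightarrow> real) \<Rightarrow> real \<Rightarrow> 'a measure set" where
  "level_measures T \<Phi> \<alpha> = {M \<in> invariant_measures T. Fstar \<Phi> M = \<alpha>}"

definition Lambda :: "('a::metric_space \<Rightarrow> 'a) \<Rightarrow> (nat \<Rightarrow> 'a \<Rightarrow> real) \<Rightarrow> (nat \<Rightarrow> 'a \<Rightarrow> real) \<Rightarrow> real \<Rightarrow> real" where
  "Lambda T F \<Phi> \<alpha> = (SUP M \<in> level_measures T \<Phi> \<alpha>. Fstar F M)"

end

theory Submission
  imports Defs
begin

lemma cont_bounded:
  fixes g :: "'a::metric_space \<Rightarrow> real"
  assumes "compact (UNIV::'a set)" "continuous_on UNIV g"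
  shows "\<exists>B. \<forall>x. \<bar>g x\<bar> \<le> B"
proof -
  have "compact (range g)" using assms compact_continuous_image by blast
  then have "bounded (range g)" by (rule compact_imp_bounded)
  then show ?thesis by (auto simp: bounded_iff)
qed

lemma cont_meas:
  fixes g :: "'a::metric_space \<Rightarrow> 'b::metric_space"
  assumes "continuous_on UNIV g"
  shows "g \<in> borel_measurable borel"
  using assms by (rule borel_measurable_continuous_onI)

lemma cont_integrable:
  fixes g :: "'a::metric_space \<Rightarrow> real"
  assumes "compact (UNIV::'a set)" "continuous_on UNIV g" "prob_space N" "sets N = sets borel"
  shows "integrable N g"
proof -
  interpret prob_space N by fact
  obtain B where B: "\<And>x. \<bar>g x\<bar> \<le> B" using cont_bounded[OF assms(1,2)] by blast
  have m: "g \<in> borel_measurable N" using cont_meas[OF assms(2)] assms(4) by (simp cong: measurable_cong_sets)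
  show ?thesis by (rule integrable_const_bound[where B=B]) (use B m in auto)
qed

lemma invD:
  assumes "N \<in> invariant_measures T"
  shows "sets N = sets borel" "prob_space N"
  using assms by (auto simp: invariant_measures_def)

lemma inv_distr:
  fixes T :: "'a::metric_space \<Rightarrow> 'a"
  assumes "N \<in> invariant_measures T" "continuous_on UNIV T"
  shows "distr N borel T = N"
proof -
  have s: "sets N = sets borel" using assms by (auto simp: invariant_measures_def)
  have sp: "space N = UNIV" using sets_eq_imp_space_eq[OF s] by simp
  have Tm: "T \<in> measurable N borel" using cont_meas[OF assms(2)] s by (simp cong: measurable_cong_sets)
  show ?thesis
  proof (rule measure_eqI)
    show "sets (distr N borel T) = sets N" using s by simp
    fix A assume "A \<in> sets (distr N borel T)"
    then have A: "A \<in> sets borel" by simp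
    have "emeasure (distr N borel T) A = emeasure N (T -` A \<inter> space N)"
      by (rule emeasure_distr[OF Tm A])
    also have "\<dots> = emeasure N A" using assms(1) A sp by (auto simp: invariant_measures_def)
    finally show "emeasure (distr N borel T) A = emeasure N A" .
  qed
qed

lemma inv_integral_iter:
  fixes T :: "'a::metric_space \<Rightarrow> 'a" and g :: "'a \<Rightarrow> real"
  assumes "N \<in> invariant_measures T" "continuous_on UNIV T" "continuous_on UNIV g"
  shows "(\<integral>x. g ((T ^^ i) x) \<partial>N) = (\<integral>x. g x \<partial>N)"
proof (induction i)
  case 0 then show ?case by simp
next
  case (Suc i)
  have s: "sets N = sets borel" using assms by (auto simp: invariant_measures_def)
  have Tm: "T \<in> measurable N borel" using cont_meas[OF assms(2)] s by (simp cong: measurable_cong_sets)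
  have ci: "continuous_on UNIV (\<lambda>x. g ((T ^^ i) x))"
  proof -
    have "continuous_on UNIV (T ^^ i)"
      by (induction i) (auto intro: continuous_on_compose[OF _ assms(2)[THEN continuous_on_subset], simplified comp_def] simp: continuous_on_id)
    then show ?thesis using assms(3) by (metis continuous_on_compose2 subset_UNIV)
  qed
  have gm: "(\<lambda>x. g ((T ^^ i) x)) \<in> borel_measurable borel" by (rule cont_meas[OF ci])
  have "(\<integral>x. g ((T ^^ Suc i) x) \<partial>N) = (\<integral>x. g ((T ^^ i) (T x)) \<partial>N)"
    by (simp del: funpow.simps add: funpow_Suc_right)
  also have "\<dots> = (\<integral>x. g ((T ^^ i) x) \<partial>distr N borel T)"
    by (rule integral_distr[symmetric, OF Tm gm])
  also have "\<dots> = (\<integral>x. g ((T ^^ i) x) \<partial>N)" using inv_distr[OF assms(1,2)] by simp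
  finally show ?case using Suc by simp
qed

lemma cont_iter:
  fixes T :: "'a::metric_space \<Rightarrow> 'a"
  assumes "continuous_on UNIV T"
  shows "continuous_on UNIV (T ^^ i)"
  by (induction i) (auto intro: continuous_on_compose[OF _ assms(1)[THEN continuous_on_subset], simplified comp_def] simp: continuous_on_id)

lemma cont_birkhoff:
  fixes T :: "'a::metric_space \<Rightarrow> 'a"
  assumes "continuous_on UNIV T" "continuous_on UNIV g"
  shows "continuous_on UNIV (birkhoff_sum T n g)"
proof -
  have "continuous_on UNIV (\<lambda>x. g ((T ^^ i) x))" for i
    using cont_iter[OF assms(1), of i] assms(2) by (metis continuous_on_compose2 subset_UNIV)
  then show ?thesis unfolding birkhoff_sum_def[abs_def] by (intro continuous_intros) auto
qed

lemma integral_birkhoff: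
  fixes T :: "'a::metric_space \<Rightarrow> 'a"
  assumes "compact (UNIV::'a set)" "N \<in> invariant_measures T" "continuous_on UNIV T" "continuous_on UNIV g"
  shows "(\<integral>x. birkhoff_sum T n g x \<partial>N) = real n * (\<integral>x. g x \<partial>N)"
proof -
  have "continuous_on UNIV (\<lambda>x. g ((T ^^ i) x))" for i
    using cont_iter[OF assms(3), of i] assms(4) by (metis continuous_on_compose2 subset_UNIV)
  then have "integrable N (\<lambda>x. g ((T ^^ i) x))" for i
    using cont_integrable[OF assms(1)] invD[OF assms(2)] by blast
  then have "(\<integral>x. birkhoff_sum T n g x \<partial>N) = (\<Sum>i<n. (\<integral>x. g ((T ^^ i) x) \<partial>N))"
    unfolding birkhoff_sum_def by (simp add: Bochner_Integration.integral_sum)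
  also have "\<dots> = (\<Sum>i<n. (\<integral>x. g x \<partial>N))"
    using inv_integral_iter[OF assms(2,3,4)] by simp
  finally show ?thesis by simp
qed

lemma sup_norm_ge:
  fixes h :: "'a::metric_space \<Rightarrow> real"
  assumes "compact (UNIV::'a set)" "continuous_on UNIV h"
  shows "\<bar>h x\<bar> \<le> sup_norm h"
proof -
  obtain B where "\<And>x. \<bar>h x\<bar> \<le> B" using cont_bounded[OF assms] by blast
  then have "bdd_above (range (\<lambda>x. \<bar>h x\<bar>))" by (intro bdd_aboveI[where M=B]) auto
  then show ?thesis unfolding sup_norm_def using cSUP_upper[of x UNIV "\<lambda>x. \<bar>h x\<bar>"] by auto
qed

lemma prob_abs_integral_le:
  fixes h :: "'a \<Rightarrow> real"
  assumes "prob_space N" "integrable N h" "\<And>x. \<bar>h x\<bar> \<le> B"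
  shows "\<bar>\<integral>x. h x \<partial>N\<bar> \<le> B"
proof -
  interpret prob_space N by fact
  have "\<bar>\<integral>x. h x \<partial>N\<bar> \<le> (\<integral>x. \<bar>h x\<bar> \<partial>N)" by (rule integral_abs_bound)
  also have "\<dots> \<le> (\<integral>x. B \<partial>N)"
    using assms by (intro integral_mono) auto
  also have "\<dots> = B" using prob_space by simp
  finally show ?thesis .
qed

lemma AAP_unif:
  fixes T :: "'a::metric_space \<Rightarrow> 'a"
  assumes cpt: "compact (UNIV::'a set)" and cT: "continuous_on UNIV T" and A: "AAP T F" and xi: "\<xi> > 0"
  shows "\<exists>g. continuous_on UNIV g \<and> (\<exists>n0. \<forall>n\<ge>n0. \<forall>N\<in>invariant_measures T.
           \<bar>(\<integral>x. F n x \<partial>N) / real n - (\<integral>x. g x \<partial>N)\<bar> \<le> \<xi>)"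
proof -
  obtain g where cg: "continuous_on UNIV g"
    and ls: "limsup (\<lambda>n. ereal (sup_norm (\<lambda>x. F n x - birkhoff_sum T n g x) / real n)) < ereal \<xi>"
    using A xi unfolding AAP_def by blast
  have "eventually (\<lambda>n. ereal (sup_norm (\<lambda>x. F n x - birkhoff_sum T n g x) / real n) < ereal \<xi>) sequentially"
    using Limsup_lessD[OF ls] .
  then obtain n0 where n0: "\<And>n. n \<ge> n0 \<Longrightarrow> sup_norm (\<lambda>x. F n x - birkhoff_sum T n g x) / real n < \<xi>"
    unfolding eventually_sequentially by auto
  have "\<bar>(\<integral>x. F n x \<partial>N) / real n - (\<integral>x. g x \<partial>N)\<bar> \<le> \<xi>"
    if n: "n \<ge> max n0 1" and N: "N \<in> invariant_measures T" for n N
  proof -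
    have n1: "n \<ge> 1" using n by simp
    have cF: "continuous_on UNIV (F n)" using A n1 unfolding AAP_def by blast
    have ch: "continuous_on UNIV (\<lambda>x. F n x - birkhoff_sum T n g x)"
      using cF cont_birkhoff[OF cT cg] by (intro continuous_intros)
    have pN: "prob_space N" and sN: "sets N = sets borel" using invD[OF N] by auto
    have iF: "integrable N (F n)" using cont_integrable[OF cpt cF pN sN] .
    have iB: "integrable N (birkhoff_sum T n g)" using cont_integrable[OF cpt cont_birkhoff[OF cT cg] pN sN] .
    have "\<bar>\<integral>x. (F n x - birkhoff_sum T n g x) \<partial>N\<bar> \<le> sup_norm (\<lambda>x. F n x - birkhoff_sum T n g x)"
      using sup_norm_ge[OF cpt ch] by (intro prob_abs_integral_le[OF pN]) (use iF iB in auto)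
    also have "\<dots> < \<xi> * real n" using n0[of n] n n1 by (simp add: field_simps)
    finally have "\<bar>(\<integral>x. F n x \<partial>N) - real n * (\<integral>x. g x \<partial>N)\<bar> < \<xi> * real n"
      using integral_birkhoff[OF cpt N cT cg, of n] iF iB by (simp add: Bochner_Integration.integral_diff)
    then have "\<bar>((\<integral>x. F n x \<partial>N) - real n * (\<integral>x. g x \<partial>N)) / real n\<bar> < \<xi>"
      using n1 by (simp add: field_simps)
    then show ?thesis using n1 by (simp add: field_simps)
  qed
  then show ?thesis using cg by blast
qed

fun cw :: "(nat \<Rightarrow> nat) \<Rightarrow> nat \<Rightarrow> real" where
  "cw m 0 = 1"
| "cw m (Suc k) = cw m k / 4 / (real (m (Suc k)) + 1)"

lemma cw_pos: "cw m k > 0"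
  by (induction k) (auto intro!: divide_pos_pos add_nonneg_pos)

lemma cw_step: "cw m (Suc k) * (real (m (Suc k)) + 1) = cw m k / 4"
proof -
  define q where "q = real (m (Suc k)) + 1"
  have q: "q \<noteq> 0" unfolding q_def by (simp add: add_nonneg_pos)
  have "cw m (Suc k) = cw m k / 4 / q" unfolding q_def by simp
  then show ?thesis using q by (simp add: q_def[symmetric])
qed

lemma cw_Suc_le: "cw m (Suc k) \<le> cw m k / 4"
proof -
  have "cw m k / 4 / (real (m (Suc k)) + 1) \<le> cw m k / 4 / 1"
    using cw_pos[of m k] by (intro frac_le) auto
  then show ?thesis by simp
qed

lemma cw_le_pow: "cw m (k + i) \<le> cw m k * (1/4)^i"
proof (induction i)
  case 0 then show ?case by simp
next
  case (Suc i)
  have "cw m (k + Suc i) \<le> cw m (k + i) / 4" using cw_Suc_le[of m "k+i"] by simp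
  also have "\<dots> \<le> cw m k * (1/4)^i / 4" using Suc by simp
  finally show ?case by simp
qed

lemma cw_mono: "j \<le> k \<Longrightarrow> cw m k \<le> cw m j"
proof -
  assume "j \<le> k"
  then obtain i where k: "k = j + i" using le_Suc_ex by blast
  have "cw m (j + i) \<le> cw m j * (1/4)^i" by (rule cw_le_pow)
  also have "\<dots> \<le> cw m j * 1" using cw_pos[of m j] by (intro mult_left_mono) (auto simp: power_le_one)
  finally show ?thesis using k by simp
qed

lemma cw_tb: "cw m k * real (m k) \<le> (real (m 0) + 1) * (1/4)^k"
proof (cases k)
  case 0 then show ?thesis by simp
next
  case (Suc j)
  have "cw m (Suc j) * real (m (Suc j)) \<le> cw m (Suc j) * (real (m (Suc j)) + 1)"
    using cw_pos[of m "Suc j"] by (intro mult_left_mono) auto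
  also have "\<dots> = cw m j / 4" by (rule cw_step)
  also have "\<dots> \<le> (1/4)^j / 4" using cw_le_pow[of m 0 j] by simp
  also have "\<dots> = 1 * (1/4)^(Suc j)" by simp
  also have "\<dots> \<le> (real (m 0) + 1) * (1/4)^(Suc j)" by (intro mult_right_mono) auto
  finally show ?thesis using Suc by simp
qed

lemma absdiff_scale:
  fixes c u v M :: real
  assumes c: "c \<ge> 0" and h: "\<bar>u - v\<bar> \<le> M"
  shows "\<bar>c * u - c * v\<bar> \<le> c * M"
proof -
  have "abs (c * u - c * v) = c * abs (u - v)" using c by (simp add: abs_mult right_diff_distrib[symmetric])
  also have "\<dots> \<le> c * M" by (rule mult_left_mono[OF h c])
  finally show ?thesis .
qed

lemma encode:
  assumes cpt: "compact (UNIV::'a::metric_space set)"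
  shows "\<exists>s::'a\<Rightarrow>real. s \<in> borel_measurable borel \<and> (\<exists>B. \<forall>x. \<bar>s x\<bar> \<le> B) \<and>
     (\<forall>\<epsilon>>0. \<exists>\<delta>>0. \<forall>x y. \<bar>s x - s y\<bar> < \<delta> \<longrightarrow> dist x y < \<epsilon>)"
proof -
  have "\<forall>k. \<exists>l::'a list. \<forall>x. \<exists>i<length l. dist x (l ! i) < (1/2)^k"
  proof
    fix k :: nat
    have "(1/2::real)^k > 0" by simp
    have "\<forall>\<epsilon>>0. \<exists>K. finite K \<and> (UNIV::'a set) \<subseteq> (\<Union>x\<in>K. ball x \<epsilon>)"
      using cpt compact_eq_totally_bounded by blast
    then obtain K :: "'a set" where K: "finite K" "UNIV \<subseteq> (\<Union>x\<in>K. ball x ((1/2)^k))"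
      using \<open>(1/2::real)^k > 0\<close> by blast
    obtain l where l: "set l = K" using finite_list[OF K(1)] by blast
    show "\<exists>l::'a list. \<forall>x. \<exists>i<length l. dist x (l ! i) < (1/2)^k"
    proof (rule exI[of _ l], rule allI)
      fix x :: 'a
      have "x \<in> (\<Union>x\<in>K. ball x ((1/2)^k))" using K(2) by blast
      then obtain y where y: "y \<in> K" "dist y x < (1/2)^k" by auto
      then obtain i where "i < length l" "l ! i = y" using l by (auto simp: in_set_conv_nth)
      then show "\<exists>i<length l. dist x (l ! i) < (1/2)^k" using y by (auto simp: dist_commute)
    qed
  qed
  then obtain ys :: "nat \<Rightarrow> 'a list" where ys: "\<And>k x. \<exists>i<length (ys k). dist x (ys k ! i) < (1/2)^k"
    by metis
  define m where "m k = length (ys k)" for k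
  define a where "a k x = (LEAST i. dist x (ys k ! i) < (1/2::real)^k)" for k x
  have a_lt: "a k x < m k" and a_dist: "dist x (ys k ! a k x) < (1/2)^k" for k x
  proof -
    obtain i where i: "i < m k" "dist x (ys k ! i) < (1/2)^k" using ys[of k x] unfolding m_def by blast
    show "dist x (ys k ! a k x) < (1/2)^k" unfolding a_def by (rule LeastI[of _ i]) (rule i(2))
    have "a k x \<le> i" unfolding a_def by (rule Least_le) (rule i(2))
    then show "a k x < m k" using i by simp
  qed
  define D where "D = real (m 0) + 1"
  have D: "D \<ge> 1" unfolding D_def by simp
  have tb: "cw m k * real (m k) \<le> D * (1/4)^k" for k unfolding D_def by (rule cw_tb)
  have term_bd: "0 \<le> cw m k * real (a k x)" "cw m k * real (a k x) \<le> D * (1/4)^k" for k x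
  proof -
    show "0 \<le> cw m k * real (a k x)" using cw_pos[of m k] by simp
    have "cw m k * real (a k x) \<le> cw m k * real (m k)"
      using cw_pos[of m k] a_lt[of k x] by (intro mult_left_mono) auto
    then show "cw m k * real (a k x) \<le> D * (1/4)^k" using tb[of k] by linarith
  qed
  have sg: "summable (\<lambda>k. D * (1/4::real)^k)" by (intro summable_mult summable_geometric) simp
  have sa: "summable (\<lambda>k. cw m k * real (a k x))" for x
    by (rule summable_comparison_test'[OF sg]) (use term_bd in auto)
  define s where "s x = (\<Sum>k. cw m k * real (a k x))" for x
  have am: "(\<lambda>x. a k x) \<in> measurable borel (count_space UNIV)" for k
    unfolding a_def apply measurable by (auto intro!: borel_measurable_continuous_onI continuous_intros)
  have sm: "s \<in> borel_measurable borel"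
  proof -
    have "(\<lambda>x. cw m k * real (a k x)) \<in> borel_measurable borel" for k
      using measurable_compose[OF am[of k], of "\<lambda>n. cw m k * real n" borel] by simp
    then show ?thesis unfolding s_def[abs_def] by (rule borel_measurable_suminf)
  qed
  have sb: "\<bar>s x\<bar> \<le> D * (4/3)" for x
  proof -
    have "0 \<le> s x" unfolding s_def using sa term_bd by (intro suminf_nonneg) auto
    moreover have "s x \<le> (\<Sum>k. D * (1/4::real)^k)" unfolding s_def
      by (rule suminf_le) (use sa sg term_bd in auto)
    moreover have "(\<Sum>k. D * (1/4::real)^k) = D * (4/3)"
      by (simp add: suminf_mult suminf_geometric)
    ultimately show ?thesis by simp
  qed
  have sep: "cw m k / 2 \<le> \<bar>s x - s y\<bar>" if eqs: "\<And>j. j < k \<Longrightarrow> a j x = a j y" and ne: "a k x \<noteq> a k y" for x y k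
  proof -
    define d where "d j = cw m j * real (a j x) - cw m j * real (a j y)" for j
    have sd: "summable d" unfolding d_def by (intro summable_diff sa)
    have "s x - s y = suminf d" unfolding s_def d_def by (rule suminf_diff) (rule sa)+
    also have "\<dots> = (\<Sum>n. d (n + Suc k)) + (\<Sum>i<Suc k. d i)" by (rule suminf_split_initial_segment[OF sd])
    also have "(\<Sum>i<Suc k. d i) = d k"
      using eqs by (simp add: d_def)
    finally have eq: "s x - s y = (\<Sum>n. d (n + Suc k)) + d k" .
    have dk: "cw m k \<le> \<bar>d k\<bar>"
    proof -
      have "1 \<le> \<bar>real (a k x) - real (a k y)\<bar>" using ne by linarith
      then have "cw m k * 1 \<le> cw m k * \<bar>real (a k x) - real (a k y)\<bar>"
        using cw_pos[of m k] by (intro mult_left_mono) auto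
      then show ?thesis unfolding d_def using cw_pos[of m k] by (simp add: right_diff_distrib[symmetric] abs_mult)
    qed
    have tl: "\<bar>d (n + Suc k)\<bar> \<le> cw m k / 4 * (1/4)^n" for n
    proof -
      let ?j = "n + Suc k"
      have "\<bar>real (a ?j x) - real (a ?j y)\<bar> \<le> real (m ?j)" using a_lt[of ?j x] a_lt[of ?j y] by linarith
      then have "\<bar>d ?j\<bar> \<le> cw m ?j * real (m ?j)"
        unfolding d_def by (rule absdiff_scale[OF less_imp_le[OF cw_pos[of m ?j]]])
      also have "\<dots> \<le> cw m ?j * (real (m ?j) + 1)" using cw_pos[of m ?j] by (intro mult_left_mono) auto
      also have "\<dots> = cw m (k + n) / 4"
      proof -
        have "?j = Suc (k + n)" by simp
        then show ?thesis using cw_step[of m "k+n"] by (simp only:)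
      qed
      also have "\<dots> \<le> cw m k * (1/4)^n / 4" using cw_le_pow[of m k n] by simp
      finally show ?thesis by simp
    qed
    have sg2: "summable (\<lambda>n. cw m k / 4 * (1/4::real)^n)" by (intro summable_mult summable_geometric) simp
    have sabs: "summable (\<lambda>n. norm (d (n + Suc k)))"
      by (rule summable_comparison_test'[OF sg2]) (use tl in auto)
    have "\<bar>\<Sum>n. d (n + Suc k)\<bar> \<le> (\<Sum>n. norm (d (n + Suc k)))"
      using summable_norm[OF sabs] by simp
    also have "\<dots> \<le> (\<Sum>n. cw m k / 4 * (1/4::real)^n)"
      by (rule suminf_le) (use tl sabs sg2 in auto)
    also have "\<dots> = cw m k / 4 * (\<Sum>n. (1/4::real)^n)" by (rule suminf_mult) simp
    also have "(\<Sum>n. (1/4::real)^n) = 4/3" by (simp add: suminf_geometric)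
    also have "cw m k / 4 * (4/3) = cw m k / 3" by simp
    finally have "\<bar>\<Sum>n. d (n + Suc k)\<bar> \<le> cw m k / 3" .
    then show ?thesis using eq dk cw_pos[of m k] by linarith
  qed
  have uc: "\<exists>\<delta>>0. \<forall>x y. \<bar>s x - s y\<bar> < \<delta> \<longrightarrow> dist x y < \<epsilon>" if e: "\<epsilon> > 0" for \<epsilon>
  proof -
    obtain K where K: "(1/2::real)^K < \<epsilon>/2" using real_arch_pow_inv[of "\<epsilon>/2" "1/2"] e by auto
    show ?thesis
    proof (intro exI conjI allI impI)
      show "cw m K / 2 > 0" using cw_pos[of m K] by simp
      fix x y assume xy: "\<bar>s x - s y\<bar> < cw m K / 2"
      show "dist x y < \<epsilon>"
      proof (rule ccontr)
        assume far: "\<not> dist x y < \<epsilon>"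
        have "a K x \<noteq> a K y"
        proof
          assume h: "a K x = a K y"
          have "dist x y \<le> dist x (ys K ! a K x) + dist y (ys K ! a K x)" by (rule dist_triangle2)
          also have "\<dots> < (1/2)^K + (1/2)^K" using a_dist[where k=K and x=x] a_dist[where k=K and x=y] h by simp
          finally show False using far K by simp
        qed
        define k0 where "k0 = (LEAST k. a k x \<noteq> a k y)"
        have k0: "a k0 x \<noteq> a k0 y" unfolding k0_def by (rule LeastI) fact
        have k0K: "k0 \<le> K" unfolding k0_def by (rule Least_le) fact
        have "\<And>j. j < k0 \<Longrightarrow> a j x = a j y" unfolding k0_def using not_less_Least by blast
        then have "cw m k0 / 2 \<le> \<bar>s x - s y\<bar>" using sep k0 by blast
        moreover have "cw m K \<le> cw m k0" by (rule cw_mono[OF k0K])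
        ultimately show False using xy by linarith
      qed
    qed
  qed
  show ?thesis using sm sb uc by blast
qed

lemma uc_ext_at:
  fixes f::"'a::metric_space \<Rightarrow> 'b::metric_space"
  assumes cplt: "Topological_Spaces.complete (UNIV::'b set)"
  assumes uc: "uniformly_continuous_on X f"
  assumes "x \<in> closure X"
  obtains l where "(f \<longlongrightarrow> l) (at x within X)"
proof -
  have conv: "\<exists>l. (\<lambda>n. f (xs n)) \<longlonglongrightarrow> l" if "Cauchy xs" "\<And>n. xs n \<in> X" for xs
  proof -
    have "Cauchy (\<lambda>n. f (xs n))" by (rule uniformly_continuous_on_Cauchy[OF uc that])
    then show ?thesis using cplt unfolding complete_def by blast
  qed
  from assms obtain xs where xs: "xs \<longlonglongrightarrow> x" "\<And>n. xs n \<in> X"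
    by (auto simp: closure_sequential)
  obtain l where l: "(\<lambda>n. f (xs n)) \<longlonglongrightarrow> l"
    using conv[OF LIMSEQ_imp_Cauchy[OF xs(1)] xs(2)] by blast
  have "(f \<longlongrightarrow> l) (at x within X)"
  proof (clarify intro!: Lim_within_LIMSEQ)
    fix xs'
    assume "\<forall>n. xs' n \<noteq> x \<and> xs' n \<in> X"
      and xs': "xs' \<longlonglongrightarrow> x"
    then have "xs' n \<noteq> x" "xs' n \<in> X" for n by auto
    show "(\<lambda>n. f (xs' n)) \<longlonglongrightarrow> l"
    proof (rule tendstoI)
      fix \<epsilon>::real assume "\<epsilon> > 0"
      define e' where "e' \<equiv> \<epsilon>/2"
      have "e' > 0" using \<open>\<epsilon> > 0\<close> by (simp add: e'_def)
      have "\<forall>\<^sub>F n in sequentially. dist (f (xs n)) l < e'"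
        by (simp add: \<open>0 < e'\<close> l tendstoD)
      moreover
      obtain \<delta> where \<delta>: "\<delta> > 0" "\<And>x x'. x \<in> X \<Longrightarrow> x' \<in> X \<Longrightarrow> dist x x' < \<delta> \<Longrightarrow> dist (f x) (f x') < e'"
        by (metis \<open>0 < e'\<close> uc uniformly_continuous_on_def)
      have "\<forall>\<^sub>F n in sequentially. dist (xs n) (xs' n) < \<delta>"
        by (auto intro!: \<open>0 < \<delta>\<close> order_tendstoD tendsto_eq_intros xs xs')
      ultimately
      show "\<forall>\<^sub>F n in sequentially. dist (f (xs' n)) l < \<epsilon>"
      proof eventually_elim
        case (elim n)
        have "dist (f (xs' n)) l \<le> dist (f (xs n)) (f (xs' n)) + dist (f (xs n)) l"
          by metric
        also have "dist (f (xs n)) (f (xs' n)) < e'"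
          by (auto intro!: \<delta> xs \<open>xs' _ \<in> _\<close> elim)
        also note \<open>dist (f (xs n)) l < e'\<close>
        also have "e' + e' = \<epsilon>" by (simp add: e'_def)
        finally show ?case by simp
      qed
    qed
  qed
  thus ?thesis ..
qed

lemma uc_ext:
  fixes f::"'a::metric_space \<Rightarrow> 'b::metric_space"
  assumes cplt: "Topological_Spaces.complete (UNIV::'b set)"
  assumes uc: "uniformly_continuous_on X f"
  obtains g where "uniformly_continuous_on (closure X) g" "\<And>x. x \<in> X \<Longrightarrow> f x = g x"
proof -
  from uc have cont_f: "continuous_on X f"
    by (simp add: uniformly_continuous_imp_continuous)
  obtain y where y: "(f \<longlongrightarrow> y x) (at x within X)" if "x \<in> closure X" for x
    using uc_ext_at[OF cplt uc] by meson
  let ?g = "\<lambda>x. if x \<in> X then f x else y x"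
  have "uniformly_continuous_on (closure X) ?g"
    unfolding uniformly_continuous_on_def
  proof safe
    fix \<epsilon>::real assume "\<epsilon> > 0"
    define e' where "e' \<equiv> \<epsilon> / 3"
    have "e' > 0" using \<open>\<epsilon> > 0\<close> by (simp add: e'_def)
    obtain \<delta> where "\<delta> > 0" and \<delta>: "\<And>x x'. x \<in> X \<Longrightarrow> x' \<in> X \<Longrightarrow> dist x' x < \<delta> \<Longrightarrow> dist (f x') (f x) < e'"
      using \<open>0 < e'\<close> uc uniformly_continuous_onE by blast
    define d' where "d' = \<delta> / 3"
    have "d' > 0" using \<open>\<delta> > 0\<close> by (simp add: d'_def)
    show "\<exists>\<delta>>0. \<forall>x\<in>closure X. \<forall>x'\<in>closure X. dist x' x < \<delta> \<longrightarrow> dist (?g x') (?g x) < \<epsilon>"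
    proof (safe intro!: exI[where x=d'] \<open>d' > 0\<close>)
      fix x x' assume x: "x \<in> closure X" and x': "x' \<in> closure X" and dist: "dist x' x < d'"
      then obtain xs xs' where xs: "xs \<longlonglongrightarrow> x" "\<And>n. xs n \<in> X"
        and xs': "xs' \<longlonglongrightarrow> x'" "\<And>n. xs' n \<in> X"
        by (auto simp: closure_sequential)
      have "\<forall>\<^sub>F n in sequentially. dist (xs' n) x' < d'"
        and "\<forall>\<^sub>F n in sequentially. dist (xs n) x < d'"
        by (auto intro!: \<open>0 < d'\<close> order_tendstoD tendsto_eq_intros xs xs')
      moreover
      have "(\<lambda>x. f (xs x)) \<longlonglongrightarrow> y x"
        if "x \<in> closure X" "x \<notin> X" "xs \<longlonglongrightarrow> x" "\<And>n. xs n \<in> X" for xs x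
        using that not_eventuallyD
        by (force intro!: filterlim_compose[OF y[OF \<open>x \<in> closure X\<close>]] simp: filterlim_at)
      then have "(\<lambda>x. f (xs' x)) \<longlonglongrightarrow> ?g x'" "(\<lambda>x. f (xs x)) \<longlonglongrightarrow> ?g x"
        using x x'
        by (auto intro!: continuous_on_tendsto_compose[OF cont_f] simp: xs' xs)
      then have "\<forall>\<^sub>F n in sequentially. dist (f (xs' n)) (?g x') < e'"
        "\<forall>\<^sub>F n in sequentially. dist (f (xs n)) (?g x) < e'"
        by (auto intro!: \<open>0 < e'\<close> order_tendstoD tendsto_eq_intros)
      ultimately
      have "\<forall>\<^sub>F n in sequentially. dist (?g x') (?g x) < \<epsilon>"
      proof eventually_elim
        case (elim n)
        have "dist (?g x') (?g x) \<le>
          dist (f (xs' n)) (?g x') + dist (f (xs' n)) (f (xs n)) + dist (f (xs n)) (?g x)"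
          by (metis add.commute add_le_cancel_left dist_commute dist_triangle dist_triangle_le)
        also
        from \<open>dist (xs' n) x' < d'\<close> \<open>dist x' x < d'\<close> \<open>dist (xs n) x < d'\<close>
        have "dist (xs' n) (xs n) < \<delta>" unfolding d'_def by metric
        with \<open>xs _ \<in> X\<close> \<open>xs' _ \<in> X\<close> have "dist (f (xs' n)) (f (xs n)) < e'"
          by (rule \<delta>)
        also note \<open>dist (f (xs' n)) (?g x') < e'\<close>
        also note \<open>dist (f (xs n)) (?g x) < e'\<close>
        finally show ?case by (simp add: e'_def)
      qed
      then show "dist (?g x') (?g x) < \<epsilon>" by simp
    qed
  qed
  moreover have "\<And>x. x \<in> X \<Longrightarrow> f x = ?g x" by simp
  ultimately show ?thesis using that by blast
qed

lemma measure_eq_cont: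
  fixes M1 M2 :: "'a::metric_space measure"
  assumes cpt: "compact (UNIV::'a set)"
    and p: "prob_space M1" "prob_space M2" and s: "sets M1 = sets borel" "sets M2 = sets borel"
    and eq: "\<And>h::'a\<Rightarrow>real. continuous_on UNIV h \<Longrightarrow> (\<integral>x. h x \<partial>M1) = (\<integral>x. h x \<partial>M2)"
  shows "M1 = M2"
proof -
  interpret P1: prob_space M1 by fact
  interpret P2: prob_space M2 by fact
  have sp1: "space M1 = UNIV" using sets_eq_imp_space_eq[OF s(1)] by simp
  have sp2: "space M2 = UNIV" using sets_eq_imp_space_eq[OF s(2)] by simp
  have closed_eq: "measure M1 C = measure M2 C" if C: "closed C" for C
  proof (cases "C = {}")
    case True then show ?thesis by simp
  next
    case False
    define h where "h n x = max 0 (1 - real n * infdist x C)" for n x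
    have hc: "continuous_on UNIV (h n)" for n unfolding h_def by (intro continuous_intros)
    have hb: "norm (h n x) \<le> 1" for n x unfolding h_def using infdist_nonneg[of x C] by auto
    have lim: "(\<lambda>n. h n x) \<longlonglongrightarrow> indicator C x" for x
    proof (cases "x \<in> C")
      case True
      then have "infdist x C = 0" by (simp add: infdist_zero)
      then show ?thesis using True unfolding h_def by simp
    next
      case xC: False
      then have pos: "infdist x C > 0" using in_closed_iff_infdist_zero[OF C False] infdist_nonneg[of x C] by auto
      obtain N where N: "1 < real N * infdist x C"
        using reals_Archimedean3[OF pos] by blast
      have "eventually (\<lambda>n. h n x = 0) sequentially"
      proof (rule eventually_sequentiallyI[of N])
        fix n assume "N \<le> n"
        then have "real N * infdist x C \<le> real n * infdist x C" using pos by (intro mult_right_mono) auto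
        then show "h n x = 0" unfolding h_def using N by simp
      qed
      then show ?thesis using xC by (simp add: tendsto_eventually)
    qed
    have hm: "h n \<in> borel_measurable borel" for n by (rule cont_meas[OF hc])
    have Cb: "C \<in> sets borel" using C by (rule borel_closed)
    have l1: "(\<lambda>n. \<integral>x. h n x \<partial>M1) \<longlonglongrightarrow> (\<integral>x. indicator C x \<partial>M1)"
      by (rule integral_dominated_convergence[where w="\<lambda>_. 1"])
         (use hm s lim hb Cb in \<open>auto simp: measurable_cong_sets[OF s(1) refl]\<close>)
    have l2: "(\<lambda>n. \<integral>x. h n x \<partial>M2) \<longlonglongrightarrow> (\<integral>x. indicator C x \<partial>M2)"
      by (rule integral_dominated_convergence[where w="\<lambda>_. 1"])
         (use hm s lim hb Cb in \<open>auto simp: measurable_cong_sets[OF s(2) refl]\<close>)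
    have "(\<integral>x. indicator C x \<partial>M1) = (\<integral>x. indicator C x \<partial>M2 :: real)"
      using l1 l2 eq[OF hc] LIMSEQ_unique by (metis (no_types, lifting) ext)
    then show ?thesis using Cb s by simp
  qed
  show ?thesis
  proof (rule measure_eqI_generator_eq[where E="Collect closed :: 'a set set" and \<Omega>=UNIV and A="\<lambda>_. UNIV"])
    show "Int_stable (Collect closed)" by (auto simp: Int_stable_def)
    show "Collect closed \<subseteq> Pow UNIV" by auto
    fix X :: "'a set" assume "X \<in> Collect closed"
    then have "closed X" "X \<in> sets borel" by (auto intro: borel_closed)
    then show "emeasure M1 X = emeasure M2 X"
      using closed_eq s by (simp add: P1.emeasure_eq_measure P2.emeasure_eq_measure)
  next
    show "sets M1 = sigma_sets UNIV (Collect closed)" using s(1) by (subst (asm) borel_eq_closed) (simp add: sets_measure_of)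
    show "sets M2 = sigma_sets UNIV (Collect closed)" using s(2) by (subst (asm) borel_eq_closed) (simp add: sets_measure_of)
  qed (auto simp: sp1)
qed

lemma weak_compact:
  fixes Mk :: "nat \<Rightarrow> 'a::metric_space measure"
  assumes cpt: "compact (UNIV::'a set)" and p: "\<And>k. prob_space (Mk k)" and sk: "\<And>k. sets (Mk k) = sets borel"
  shows "\<exists>r M. strict_mono r \<and> prob_space M \<and> sets M = sets borel \<and>
     (\<forall>h::'a\<Rightarrow>real. continuous_on UNIV h \<longrightarrow> (\<lambda>k. \<integral>x. h x \<partial>Mk (r k)) \<longlonglongrightarrow> (\<integral>x. h x \<partial>M))"
proof -
  obtain s :: "'a \<Rightarrow> real" where sm: "s \<in> borel_measurable borel" and sB: "\<exists>B. \<forall>x. \<bar>s x\<bar> \<le> B"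
    and suc: "\<And>\<epsilon>. \<epsilon> > 0 \<Longrightarrow> \<exists>\<delta>>0. \<forall>x y. \<bar>s x - s y\<bar> < \<delta> \<longrightarrow> dist x y < \<epsilon>"
    using encode[OF cpt] by blast
  obtain B where B: "\<And>x. \<bar>s x\<bar> \<le> B" using sB by blast
  have inj: "inj s"
  proof (rule injI)
    fix x y assume h: "s x = s y"
    have "dist x y < \<epsilon>" if e0: "\<epsilon> > 0" for \<epsilon>
    proof -
      obtain \<delta> where "\<delta> > 0" "\<And>x y. \<bar>s x - s y\<bar> < \<delta> \<Longrightarrow> dist x y < \<epsilon>" using suc[OF e0] by blast
      then show ?thesis using h by simp
    qed
    then show "x = y" by (metis dist_pos_lt less_irrefl)
  qed
  define S where "S = range s"
  define si where "si = inv s"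
  have si: "si (s x) = x" for x unfolding si_def using inj by simp
  have ucs: "uniformly_continuous_on S si"
    unfolding uniformly_continuous_on_def
  proof (intro allI impI)
    fix e :: real assume "e > 0"
    then obtain d where d: "d > 0" "\<And>x y. \<bar>s x - s y\<bar> < d \<Longrightarrow> dist x y < e" using suc by blast
    show "\<exists>d>0. \<forall>x\<in>S. \<forall>x'\<in>S. dist x' x < d \<longrightarrow> dist (si x') (si x) < e"
    proof (intro exI[of _ d] conjI ballI impI)
      show "d > 0" by (rule d(1))
      fix x x' assume x: "x \<in> S" and x': "x' \<in> S" and dd: "dist x' x < d"
      obtain u where u: "x = s u" using x unfolding S_def by blast
      obtain v where v: "x' = s v" using x' unfolding S_def by blast
      have "\<bar>s v - s u\<bar> < d" using dd u v by (simp add: dist_real_def)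
      then have "dist v u < e" by (rule d(2))
      then show "dist (si x') (si x) < e" using u v si by simp
    qed
  qed
  have cplt: "Topological_Spaces.complete (UNIV::'a set)" by (rule compact_imp_complete[OF cpt])
  obtain g where gu: "uniformly_continuous_on (closure S) g" and gS: "\<And>x. x \<in> S \<Longrightarrow> si x = g x"
    using uc_ext[OF cplt ucs] by blast
  define C where "C = closure S"
  have gc: "continuous_on C g" unfolding C_def using gu by (rule uniformly_continuous_imp_continuous)
  have Cc: "closed C" unfolding C_def by simp
  have sC: "s x \<in> C" for x unfolding C_def by (rule closure_subset[THEN subsetD]) (simp add: S_def)
  have gs: "g (s x) = x" for x using gS[of "s x"] si[of x] by (simp add: S_def)
  define pt where "pt t = (if t \<in> C then g t else undefined)" for t
  have ptm: "pt \<in> borel_measurable borel"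
    unfolding pt_def by (rule borel_measurable_continuous_on_if) (use Cc gc in \<open>auto simp: borel_closed\<close>)
  have pts: "pt (s x) = x" for x unfolding pt_def using sC gs by simp
  define N where "N k = distr (Mk k) borel s" for k
  have smk: "s \<in> measurable (Mk k) borel" for k using sm sk by (simp cong: measurable_cong_sets)
  have spk: "space (Mk k) = UNIV" for k using sets_eq_imp_space_eq[OF sk[of k]] by simp
  have rd: "real_distribution (N k)" for k
  proof -
    interpret prob_space "Mk k" by (rule p)
    have "prob_space (N k)" unfolding N_def by (rule prob_space_distr[OF smk])
    then show ?thesis unfolding real_distribution_def real_distribution_axioms_def N_def by simp
  qed
  have tight: "tight N"
    unfolding tight_def
  proof (intro conjI allI impI rd)
    fix \<epsilon> :: real assume e: "\<epsilon> > 0"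
    show "\<exists>a b. a < b \<and> (\<forall>n. 1 - \<epsilon> < measure (N n) {a<..b})"
    proof (intro exI conjI allI)
      show "- B - 1 < B + 1" using B[of undefined] by simp
      fix n
      interpret prob_space "Mk n" by (rule p)
      have "measure (N n) {- B - 1<..B + 1} = measure (Mk n) (s -` {- B - 1<..B + 1} \<inter> space (Mk n))"
        unfolding N_def by (rule measure_distr[OF smk]) simp
      also have "s -` {- B - 1<..B + 1} \<inter> space (Mk n) = space (Mk n)"
      proof -
        have "s x \<in> {- B - 1<..B + 1}" for x using B[of x] by (simp add: abs_le_iff)
        then show ?thesis by blast
      qed
      also have "measure (Mk n) (space (Mk n)) = 1" by (rule prob_space)
      finally show "1 - \<epsilon> < measure (N n) {- B - 1<..B + 1}" using e by simp
    qed
  qed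
  obtain r N0 where r: "strict_mono r" and N0: "real_distribution N0" and wc: "weak_conv_m (N \<circ> id \<circ> r) N0"
    using tight_imp_convergent_subsubsequence[OF tight, of id] by (auto simp: strict_mono_def)
  have rdr: "real_distribution ((N \<circ> id \<circ> r) n)" for n using rd by simp
  obtain \<Omega> :: "real measure" and Y_seq :: "nat \<Rightarrow> real \<Rightarrow> real" and Y :: "real \<Rightarrow> real" where
    O: "prob_space \<Omega>" and Ym: "\<And>n. Y_seq n \<in> measurable \<Omega> borel"
    and Yd: "\<And>n. distr \<Omega> borel (Y_seq n) = (N \<circ> id \<circ> r) n"
    and YM: "Y \<in> measurable \<Omega> lborel" and YD: "distr \<Omega> borel Y = N0"
    and Ylim: "\<And>x. x \<in> space \<Omega> \<Longrightarrow> (\<lambda>n. Y_seq n x) \<longlonglongrightarrow> Y x"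
    using Skorohod[OF rdr N0 wc] by blast
  interpret O: prob_space \<Omega> by fact
  have YMb: "Y \<in> measurable \<Omega> borel" using YM by (simp cong: measurable_cong_sets)
  have aeC: "AE \<omega> in \<Omega>. Y_seq n \<omega> \<in> C" for n
  proof -
    have ae: "AE t in N (r n). t \<in> C"
      unfolding N_def by (subst AE_distr_iff[OF smk]) (use Cc sC in \<open>auto simp: borel_closed\<close>)
    have eq: "distr \<Omega> borel (Y_seq n) = N (r n)" using Yd[of n] by simp
    have "AE t in distr \<Omega> borel (Y_seq n). t \<in> C" unfolding eq by (rule ae)
    then show ?thesis by (rule AE_distrD[OF Ym])
  qed
  have aeall: "AE \<omega> in \<Omega>. (\<forall>n. Y_seq n \<omega> \<in> C) \<and> Y \<omega> \<in> C"
  proof -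
    have "AE \<omega> in \<Omega>. \<forall>n. Y_seq n \<omega> \<in> C" using aeC by (simp add: AE_all_countable)
    then show ?thesis
    proof (rule AE_mp, intro AE_I2 impI conjI)
      fix \<omega> assume \<omega>: "\<omega> \<in> space \<Omega>" and h: "\<forall>n. Y_seq n \<omega> \<in> C"
      show "\<forall>n. Y_seq n \<omega> \<in> C" by (rule h)
      show "Y \<omega> \<in> C" by (rule closed_sequentially[OF Cc _ Ylim[OF \<omega>]]) (use h in auto)
    qed
  qed
  define M where "M = distr N0 borel pt"
  have N0s: "sets N0 = sets borel" using N0 by (simp add: real_distribution_def real_distribution_axioms_def)
  have ptm0: "pt \<in> measurable N0 borel" using ptm N0s by (simp cong: measurable_cong_sets)
  have Mp: "prob_space M"
  proof -
    interpret N0: real_distribution N0 by fact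
    show ?thesis unfolding M_def by (rule N0.prob_space_distr[OF ptm0])
  qed
  have Ms: "sets M = sets borel" unfolding M_def by simp
  have conv: "(\<lambda>k. \<integral>x. h x \<partial>Mk (r k)) \<longlonglongrightarrow> (\<integral>x. h x \<partial>M)" if hc: "continuous_on UNIV h" for h :: "'a \<Rightarrow> real"
  proof -
    obtain Bh where Bh: "\<And>x. \<bar>h x\<bar> \<le> Bh" using cont_bounded[OF cpt hc] by blast
    have hm: "h \<in> borel_measurable borel" by (rule cont_meas[OF hc])
    have hpm: "(\<lambda>t. h (pt t)) \<in> borel_measurable borel" using hm ptm by measurable
    have e1: "(\<integral>x. h x \<partial>Mk (r k)) = (\<integral>\<omega>. h (pt (Y_seq k \<omega>)) \<partial>\<Omega>)" for k
    proof -
      have "(\<integral>x. h x \<partial>Mk (r k)) = (\<integral>x. h (pt (s x)) \<partial>Mk (r k))" by (simp add: pts)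
      also have "\<dots> = (\<integral>t. h (pt t) \<partial>N (r k))" unfolding N_def
        by (rule integral_distr[symmetric, OF smk hpm])
      also have "\<dots> = (\<integral>t. h (pt t) \<partial>distr \<Omega> borel (Y_seq k))" using Yd[of k] by simp
      also have "\<dots> = (\<integral>\<omega>. h (pt (Y_seq k \<omega>)) \<partial>\<Omega>)" by (rule integral_distr[OF Ym hpm])
      finally show ?thesis .
    qed
    have e2: "(\<integral>x. h x \<partial>M) = (\<integral>\<omega>. h (pt (Y \<omega>)) \<partial>\<Omega>)"
    proof -
      have "(\<integral>x. h x \<partial>M) = (\<integral>t. h (pt t) \<partial>N0)" unfolding M_def by (rule integral_distr[OF ptm0 hm])
      also have "\<dots> = (\<integral>t. h (pt t) \<partial>distr \<Omega> borel Y)" using YD by simp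
      also have "\<dots> = (\<integral>\<omega>. h (pt (Y \<omega>)) \<partial>\<Omega>)" by (rule integral_distr[OF YMb hpm])
      finally show ?thesis .
    qed
    have hgc: "continuous_on C (\<lambda>t. h (g t))"
      using continuous_on_compose2[OF hc gc] by auto
    have "(\<lambda>k. \<integral>\<omega>. h (pt (Y_seq k \<omega>)) \<partial>\<Omega>) \<longlonglongrightarrow> (\<integral>\<omega>. h (pt (Y \<omega>)) \<partial>\<Omega>)"
    proof (rule integral_dominated_convergence[where w="\<lambda>_. Bh"])
      show "(\<lambda>\<omega>. h (pt (Y \<omega>))) \<in> borel_measurable \<Omega>" using hpm YMb by measurable
      show "(\<lambda>\<omega>. h (pt (Y_seq k \<omega>))) \<in> borel_measurable \<Omega>" for k using hpm Ym[of k] by measurable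
      show "integrable \<Omega> (\<lambda>_. Bh)" by simp
      show "AE \<omega> in \<Omega>. norm (h (pt (Y_seq k \<omega>))) \<le> Bh" for k using Bh by simp
      show "AE \<omega> in \<Omega>. (\<lambda>k. h (pt (Y_seq k \<omega>))) \<longlonglongrightarrow> h (pt (Y \<omega>))"
        using aeall
      proof (rule AE_mp, intro AE_I2 impI)
        fix \<omega> assume \<omega>: "\<omega> \<in> space \<Omega>" and h1: "(\<forall>n. Y_seq n \<omega> \<in> C) \<and> Y \<omega> \<in> C"
        have "(\<lambda>k. h (g (Y_seq k \<omega>))) \<longlonglongrightarrow> h (g (Y \<omega>))"
          by (rule continuous_on_tendsto_compose[OF hgc Ylim[OF \<omega>]]) (use h1 in auto)
        then show "(\<lambda>k. h (pt (Y_seq k \<omega>))) \<longlonglongrightarrow> h (pt (Y \<omega>))" using h1 by (simp add: pt_def)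
      qed
    qed
    then show ?thesis using e1 e2 by simp
  qed
  show ?thesis using r Mp Ms conv by blast
qed

lemma Fstar_conv:
  fixes T :: "'a::metric_space \<Rightarrow> 'a"
  assumes cpt: "compact (UNIV::'a set)" and cT: "continuous_on UNIV T" and A: "AAP T F"
    and N: "N \<in> invariant_measures T"
  shows "(\<lambda>n. (\<integral>x. F n x \<partial>N) / real n) \<longlonglongrightarrow> Fstar F N"
proof -
  let ?a = "\<lambda>n. (\<integral>x. F n x \<partial>N) / real n"
  have "Cauchy ?a"
  proof (rule CauchyI)
    fix e :: real assume e: "e > 0"
    obtain g n0 where g: "\<And>n N. n \<ge> n0 \<Longrightarrow> N \<in> invariant_measures T \<Longrightarrow>
        \<bar>(\<integral>x. F n x \<partial>N) / real n - (\<integral>x. g x \<partial>N)\<bar> \<le> e/3"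
      using AAP_unif[OF cpt cT A, of "e/3"] e by auto
    show "\<exists>M. \<forall>m\<ge>M. \<forall>n\<ge>M. norm (?a m - ?a n) < e"
    proof (intro exI allI impI)
      fix m n assume "m \<ge> n0" "n \<ge> n0"
      then have "\<bar>?a m - (\<integral>x. g x \<partial>N)\<bar> \<le> e/3" "\<bar>?a n - (\<integral>x. g x \<partial>N)\<bar> \<le> e/3"
        using g N by auto
      then show "norm (?a m - ?a n) < e" using e by (simp only: real_norm_def abs_le_iff abs_less_iff) linarith
    qed
  qed
  then have "convergent ?a" by (simp add: Cauchy_convergent_iff)
  then show ?thesis unfolding Fstar_def by (simp add: convergent_LIMSEQ_iff)
qed

lemma Fstar_approx:
  fixes T :: "'a::metric_space \<Rightarrow> 'a"
  assumes cpt: "compact (UNIV::'a set)" and cT: "continuous_on UNIV T" and A: "AAP T F" and xi: "\<xi> > 0"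
  shows "\<exists>g. continuous_on UNIV g \<and> (\<forall>N\<in>invariant_measures T. \<bar>Fstar F N - (\<integral>x. g x \<partial>N)\<bar> \<le> \<xi>)"
proof -
  obtain g n0 where cg: "continuous_on UNIV g" and g: "\<And>n N. n \<ge> n0 \<Longrightarrow> N \<in> invariant_measures T \<Longrightarrow>
        \<bar>(\<integral>x. F n x \<partial>N) / real n - (\<integral>x. g x \<partial>N)\<bar> \<le> \<xi>"
    using AAP_unif[OF cpt cT A xi] by auto
  have "\<bar>Fstar F N - (\<integral>x. g x \<partial>N)\<bar> \<le> \<xi>" if N: "N \<in> invariant_measures T" for N
  proof -
    have "(\<lambda>n. \<bar>(\<integral>x. F n x \<partial>N) / real n - (\<integral>x. g x \<partial>N)\<bar>) \<longlonglongrightarrow> \<bar>Fstar F N - (\<integral>x. g x \<partial>N)\<bar>"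
      by (intro tendsto_intros Fstar_conv[OF cpt cT A N])
    then show ?thesis by (rule LIMSEQ_le_const2) (use g N in auto)
  qed
  then show ?thesis using cg by blast
qed

lemma Fstar_bounded:
  fixes T :: "'a::metric_space \<Rightarrow> 'a"
  assumes cpt: "compact (UNIV::'a set)" and cT: "continuous_on UNIV T" and A: "AAP T F"
  shows "\<exists>B. \<forall>N\<in>invariant_measures T. \<bar>Fstar F N\<bar> \<le> B"
proof -
  obtain g where cg: "continuous_on UNIV g" and g: "\<And>N. N\<in>invariant_measures T \<Longrightarrow> \<bar>Fstar F N - (\<integral>x. g x \<partial>N)\<bar> \<le> 1"
    using Fstar_approx[OF cpt cT A, of 1] by auto
  obtain B where B: "\<And>x. \<bar>g x\<bar> \<le> B" using cont_bounded[OF cpt cg] by blast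
  have "\<bar>Fstar F N\<bar> \<le> B + 1" if N: "N\<in>invariant_measures T" for N
  proof -
    have "\<bar>\<integral>x. g x \<partial>N\<bar> \<le> B"
      using invD[OF N] cont_integrable[OF cpt cg] B by (intro prob_abs_integral_le) auto
    then show ?thesis using g[OF N] by linarith
  qed
  then show ?thesis by blast
qed

lemma Fstar_weak_cont:
  fixes T :: "'a::metric_space \<Rightarrow> 'a"
  assumes cpt: "compact (UNIV::'a set)" and cT: "continuous_on UNIV T" and A: "AAP T F"
    and Mk: "\<And>k. Mk k \<in> invariant_measures T" and M: "M \<in> invariant_measures T"
    and wc: "\<And>h::'a\<Rightarrow>real. continuous_on UNIV h \<Longrightarrow> (\<lambda>k. \<integral>x. h x \<partial>Mk k) \<longlonglongrightarrow> (\<integral>x. h x \<partial>M)"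
  shows "(\<lambda>k. Fstar F (Mk k)) \<longlonglongrightarrow> Fstar F M"
proof (rule metric_LIMSEQ_I)
  fix r :: real assume r: "r > 0"
  obtain g where cg: "continuous_on UNIV g" and g: "\<And>N. N\<in>invariant_measures T \<Longrightarrow> \<bar>Fstar F N - (\<integral>x. g x \<partial>N)\<bar> \<le> r/3"
    using Fstar_approx[OF cpt cT A, of "r/3"] r by auto
  have "(\<lambda>k. \<integral>x. g x \<partial>Mk k) \<longlonglongrightarrow> (\<integral>x. g x \<partial>M)" by (rule wc[OF cg])
  then obtain k0 where k0: "\<And>k. k \<ge> k0 \<Longrightarrow> dist (\<integral>x. g x \<partial>Mk k) (\<integral>x. g x \<partial>M) < r/3"
    using r unfolding lim_sequentially by (meson divide_pos_pos zero_less_numeral)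
  show "\<exists>no. \<forall>n\<ge>no. dist (Fstar F (Mk n)) (Fstar F M) < r"
  proof (intro exI allI impI)
    fix n assume "n \<ge> k0"
    then have "dist (\<integral>x. g x \<partial>Mk n) (\<integral>x. g x \<partial>M) < r/3" by (rule k0)
    moreover have "\<bar>Fstar F (Mk n) - (\<integral>x. g x \<partial>Mk n)\<bar> \<le> r/3" using g Mk by blast
    moreover have "\<bar>Fstar F M - (\<integral>x. g x \<partial>M)\<bar> \<le> r/3" using g M by blast
    ultimately show "dist (Fstar F (Mk n)) (Fstar F M) < r" by (simp only: dist_real_def abs_le_iff abs_less_iff) linarith
  qed
qed

definition comb :: "real \<Rightarrow> 'a measure \<Rightarrow> 'a measure \<Rightarrow> 'a measure" where
  "comb t N1 N2 = measure_pmf (bernoulli_pmf t) \<bind> (\<lambda>b. if b then N1 else N2)"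

lemma comb_facts:
  fixes N1 N2 :: "'a::metric_space measure"
  assumes t: "0 \<le> t" "t \<le> 1" and p: "prob_space N1" "prob_space N2"
    and s: "sets N1 = sets borel" "sets N2 = sets borel"
  shows "sets (comb t N1 N2) = sets borel"
    and "\<And>A. A \<in> sets borel \<Longrightarrow> emeasure (comb t N1 N2) A = emeasure N1 A * ennreal t + emeasure N2 A * ennreal (1 - t)"
    and "prob_space (comb t N1 N2)"
    and "\<And>f::'a\<Rightarrow>real. f \<in> borel_measurable borel \<Longrightarrow> (\<And>x. \<bar>f x\<bar> \<le> B) \<Longrightarrow>
           (\<integral>x. f x \<partial>comb t N1 N2) = (\<integral>x. f x \<partial>N1) * t + (\<integral>x. f x \<partial>N2) * (1 - t)"
proof -
  let ?K = "\<lambda>b. if b then N1 else N2"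
  have K: "?K \<in> measurable (measure_pmf (bernoulli_pmf t)) (subprob_algebra borel)"
    using p s by (auto simp: space_subprob_algebra prob_space_imp_subprob_space)
  have ne: "space (measure_pmf (bernoulli_pmf t)) \<noteq> {}" by simp
  show ss: "sets (comb t N1 N2) = sets borel" unfolding comb_def
    by (rule sets_bind) (use s in auto)
  show em: "emeasure (comb t N1 N2) A = emeasure N1 A * ennreal t + emeasure N2 A * ennreal (1 - t)"
    if A: "A \<in> sets borel" for A
    unfolding comb_def using t by (simp add: emeasure_bind[OF ne K A])
  show "prob_space (comb t N1 N2)"
  proof
    have sp: "space (comb t N1 N2) = UNIV" using sets_eq_imp_space_eq[OF ss] by simp
    have "emeasure (comb t N1 N2) UNIV = ennreal t + ennreal (1 - t)"
      using em[of UNIV] p by (simp add: prob_space.emeasure_space_1[of N1, simplified sets_eq_imp_space_eq[OF s(1)], simplified]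
          prob_space.emeasure_space_1[of N2, simplified sets_eq_imp_space_eq[OF s(2)], simplified])
    also have "\<dots> = 1" using t by (simp add: ennreal_plus[symmetric] del: ennreal_plus)
    finally show "emeasure (comb t N1 N2) (space (comb t N1 N2)) = 1" using sp by simp
  qed
  fix f :: "'a \<Rightarrow> real" assume fm: "f \<in> borel_measurable borel" and fb: "\<And>x. \<bar>f x\<bar> \<le> B"
  have "(\<integral>x. f x \<partial>comb t N1 N2) = (\<integral>b. (\<integral>x. f x \<partial>?K b) \<partial>measure_pmf (bernoulli_pmf t))"
    unfolding comb_def
  proof (rule integral_bind[where B=B and B'=1])
    show "finite_measure (measure_pmf (bernoulli_pmf t))" using prob_space_measure_pmf unfolding prob_space_def by blast
    show "AE x in measure_pmf (bernoulli_pmf t). emeasure (?K x) (space (?K x)) \<le> ennreal 1"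
      using p by (auto simp: prob_space.emeasure_space_1)
  qed (use fm fb K in auto)
  also have "\<dots> = (\<integral>x. f x \<partial>N1) * t + (\<integral>x. f x \<partial>N2) * (1 - t)"
    using t by simp
  finally show "(\<integral>x. f x \<partial>comb t N1 N2) = (\<integral>x. f x \<partial>N1) * t + (\<integral>x. f x \<partial>N2) * (1 - t)" .
qed

lemma comb_inv:
  fixes T :: "'a::metric_space \<Rightarrow> 'a"
  assumes cT: "continuous_on UNIV T" and t: "0 \<le> t" "t \<le> 1"
    and N1: "N1 \<in> invariant_measures T" and N2: "N2 \<in> invariant_measures T"
  shows "comb t N1 N2 \<in> invariant_measures T"
proof -
  note f = comb_facts[OF t invD(2)[OF N1] invD(2)[OF N2] invD(1)[OF N1] invD(1)[OF N2]]
  have Tm: "T \<in> borel_measurable borel" by (rule cont_meas[OF cT])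
  have "emeasure (comb t N1 N2) (T -` A) = emeasure (comb t N1 N2) A" if A: "A \<in> sets borel" for A
  proof -
    have TA: "T -` A \<in> sets borel" using measurable_sets[OF Tm A] by simp
    show ?thesis using N1 N2 A by (simp add: f(2)[OF TA] f(2)[OF A] invariant_measures_def)
  qed
  then show ?thesis using f(1,3) unfolding invariant_measures_def by blast
qed

lemma Fstar_comb:
  fixes T :: "'a::metric_space \<Rightarrow> 'a"
  assumes cpt: "compact (UNIV::'a set)" and cT: "continuous_on UNIV T" and A: "AAP T F"
    and t: "0 \<le> t" "t \<le> 1"
    and N1: "N1 \<in> invariant_measures T" and N2: "N2 \<in> invariant_measures T"
  shows "Fstar F (comb t N1 N2) = t * Fstar F N1 + (1 - t) * Fstar F N2"
proof -
  note f = comb_facts[OF t invD(2)[OF N1] invD(2)[OF N2] invD(1)[OF N1] invD(1)[OF N2]]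
  have C: "comb t N1 N2 \<in> invariant_measures T" by (rule comb_inv[OF cT t N1 N2])
  have eq: "(\<integral>x. F n x \<partial>comb t N1 N2) / real n = t * ((\<integral>x. F n x \<partial>N1) / real n) + (1 - t) * ((\<integral>x. F n x \<partial>N2) / real n)" for n
  proof (cases "n = 0")
    case True then show ?thesis by simp
  next
    case False
    then have cF: "continuous_on UNIV (F n)" using A unfolding AAP_def by auto
    obtain B where B: "\<And>x. \<bar>F n x\<bar> \<le> B" using cont_bounded[OF cpt cF] by blast
    have "(\<integral>x. F n x \<partial>comb t N1 N2) = (\<integral>x. F n x \<partial>N1) * t + (\<integral>x. F n x \<partial>N2) * (1 - t)"
      by (rule f(4)[OF cont_meas[OF cF]]) (rule B)
    then show ?thesis using False by (simp add: field_simps)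
  qed
  have "(\<lambda>n. (\<integral>x. F n x \<partial>comb t N1 N2) / real n) \<longlonglongrightarrow> t * Fstar F N1 + (1 - t) * Fstar F N2"
    unfolding eq by (intro tendsto_intros Fstar_conv[OF cpt cT A N1] Fstar_conv[OF cpt cT A N2])
  then show ?thesis using Fstar_conv[OF cpt cT A C] LIMSEQ_unique by blast
qed

lemma weak_compact_inv:
  fixes T :: "'a::metric_space \<Rightarrow> 'a" and Mk :: "nat \<Rightarrow> 'a measure"
  assumes cpt: "compact (UNIV::'a set)" and cT: "continuous_on UNIV T"
    and Mk: "\<And>k. Mk k \<in> invariant_measures T"
  shows "\<exists>r M. strict_mono r \<and> M \<in> invariant_measures T \<and>
     (\<forall>h::'a\<Rightarrow>real. continuous_on UNIV h \<longrightarrow> (\<lambda>k. \<integral>x. h x \<partial>Mk (r k)) \<longlonglongrightarrow> (\<integral>x. h x \<partial>M))"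
proof -
  obtain r M where r: "strict_mono r" and Mp: "prob_space M" and Ms: "sets M = sets borel"
    and wc: "\<And>h::'a\<Rightarrow>real. continuous_on UNIV h \<Longrightarrow> (\<lambda>k. \<integral>x. h x \<partial>Mk (r k)) \<longlonglongrightarrow> (\<integral>x. h x \<partial>M)"
    using weak_compact[of Mk, OF cpt invD(2)[OF Mk] invD(1)[OF Mk]] by blast
  have Tm: "T \<in> measurable M borel" using cont_meas[OF cT] Ms by (simp cong: measurable_cong_sets)
  have Tb: "T \<in> borel_measurable borel" by (rule cont_meas[OF cT])
  have dM: "distr M borel T = M"
  proof (rule measure_eq_cont[OF cpt])
    interpret prob_space M by fact
    show "prob_space (distr M borel T)" by (rule prob_space_distr[OF Tm])
    show "prob_space M" by fact
    show "sets (distr M borel T) = sets borel" by simp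
    show "sets M = sets borel" by fact
    fix h :: "'a \<Rightarrow> real" assume hc: "continuous_on UNIV h"
    have hm: "h \<in> borel_measurable borel" by (rule cont_meas[OF hc])
    have hT: "continuous_on UNIV (\<lambda>x. h (T x))" using continuous_on_compose2[OF hc cT] by auto
    have "(\<integral>x. h x \<partial>distr M borel T) = (\<integral>x. h (T x) \<partial>M)" by (rule integral_distr[OF Tm hm])
    moreover have "(\<lambda>k. \<integral>x. h (T x) \<partial>Mk (r k)) \<longlonglongrightarrow> (\<integral>x. h (T x) \<partial>M)" by (rule wc[OF hT])
    moreover have "(\<integral>x. h (T x) \<partial>Mk (r k)) = (\<integral>x. h x \<partial>Mk (r k))" for k
      using inv_integral_iter[OF Mk[of "r k"] cT hc, of 1] by simp
    ultimately show "(\<integral>x. h x \<partial>distr M borel T) = (\<integral>x. h x \<partial>M)"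
      using wc[OF hc] LIMSEQ_unique by auto
  qed
  have "M \<in> invariant_measures T"
    unfolding invariant_measures_def
  proof (intro CollectI conjI ballI)
    show "sets M = sets borel" "prob_space M" by fact+
    fix A :: "'a set" assume A: "A \<in> sets borel"
    have sp: "space M = UNIV" using sets_eq_imp_space_eq[OF Ms] by simp
    have "emeasure M A = emeasure (distr M borel T) A" using dM by simp
    also have "\<dots> = emeasure M (T -` A \<inter> space M)" by (rule emeasure_distr[OF Tm A])
    finally show "emeasure M (T -` A) = emeasure M A" using sp by simp
  qed
  then show ?thesis using r wc by blast
qed

lemma attain_inf:
  fixes T :: "'a::metric_space \<Rightarrow> 'a"
  assumes cpt: "compact (UNIV::'a set)" and cT: "continuous_on UNIV T" and A: "AAP T F"
    and ne: "invariant_measures T \<noteq> {}"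
  shows "\<exists>N\<in>invariant_measures T. Fstar F N = eta T F"
proof -
  obtain B where B: "\<And>N. N\<in>invariant_measures T \<Longrightarrow> \<bar>Fstar F N\<bar> \<le> B"
    using Fstar_bounded[OF cpt cT A] by blast
  have bdd: "bdd_below (Fstar F ` invariant_measures T)"
    using B by (intro bdd_belowI[where m="-B"]) (force simp: abs_le_iff)
  let ?e = "eta T F"
  have "\<exists>N\<in>invariant_measures T. Fstar F N < ?e + 1 / (real k + 1)" for k
  proof -
    have "?e < ?e + 1 / (real k + 1)" by simp
    then show ?thesis unfolding eta_def using cINF_less_iff[OF ne bdd] by blast
  qed
  then obtain Mk where Mk: "\<And>k. Mk k \<in> invariant_measures T"
      and lt: "\<And>k. Fstar F (Mk k) < ?e + 1 / (real k + 1)" by metis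
  have ge: "?e \<le> Fstar F (Mk k)" for k unfolding eta_def by (rule cINF_lower[OF bdd Mk])
  have lim: "(\<lambda>k. Fstar F (Mk k)) \<longlonglongrightarrow> ?e"
  proof (rule real_tendsto_sandwich[where f="\<lambda>k. ?e" and h="\<lambda>k. ?e + 1 / (real k + 1)"])
    show "\<forall>\<^sub>F n in sequentially. ?e \<le> Fstar F (Mk n)" using ge by simp
    show "\<forall>\<^sub>F n in sequentially. Fstar F (Mk n) \<le> ?e + 1 / (real n + 1)" using lt by (simp add: less_imp_le)
    show "(\<lambda>k. ?e) \<longlonglongrightarrow> ?e" by simp
    have "(\<lambda>k. 1 / (real k + 1)) \<longlonglongrightarrow> 0" using LIMSEQ_inverse_real_of_nat by (simp add: inverse_eq_divide add.commute)
    then show "(\<lambda>k. ?e + 1 / (real k + 1)) \<longlonglongrightarrow> ?e" using tendsto_add[of "\<lambda>k. ?e" ?e sequentially] by fastforce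
  qed
  obtain r M where r: "strict_mono r" and M: "M \<in> invariant_measures T"
    and wc: "\<And>h::'a\<Rightarrow>real. continuous_on UNIV h \<Longrightarrow> (\<lambda>k. \<integral>x. h x \<partial>Mk (r k)) \<longlonglongrightarrow> (\<integral>x. h x \<partial>M)"
    using weak_compact_inv[where Mk=Mk, OF cpt cT Mk] by blast
  have "(\<lambda>k. Fstar F (Mk (r k))) \<longlonglongrightarrow> Fstar F M"
    by (rule Fstar_weak_cont[OF cpt cT A _ M wc]) (use Mk in auto)
  moreover have "(\<lambda>k. Fstar F (Mk (r k))) \<longlonglongrightarrow> ?e"
    using LIMSEQ_subseq_LIMSEQ[OF lim r] by (simp add: comp_def)
  ultimately have "Fstar F M = ?e" by (rule LIMSEQ_unique)
  then show ?thesis using M by blast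
qed

lemma attain_sup:
  fixes T :: "'a::metric_space \<Rightarrow> 'a"
  assumes cpt: "compact (UNIV::'a set)" and cT: "continuous_on UNIV T" and A: "AAP T F"
    and ne: "invariant_measures T \<noteq> {}"
  shows "\<exists>N\<in>invariant_measures T. Fstar F N = beta T F"
proof -
  obtain B where B: "\<And>N. N\<in>invariant_measures T \<Longrightarrow> \<bar>Fstar F N\<bar> \<le> B"
    using Fstar_bounded[OF cpt cT A] by blast
  have bdd: "bdd_above (Fstar F ` invariant_measures T)"
    using B by (intro bdd_aboveI[where M="B"]) (force simp: abs_le_iff)
  let ?e = "beta T F"
  have "\<exists>N\<in>invariant_measures T. ?e - 1 / (real k + 1) < Fstar F N" for k
  proof -
    have "?e - 1 / (real k + 1) < ?e" by simp
    then show ?thesis unfolding beta_def using less_cSUP_iff[OF ne bdd] by blast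
  qed
  then obtain Mk where Mk: "\<And>k. Mk k \<in> invariant_measures T"
      and lt: "\<And>k. ?e - 1 / (real k + 1) < Fstar F (Mk k)" by metis
  have ge: "Fstar F (Mk k) \<le> ?e" for k unfolding beta_def by (rule cSUP_upper[OF Mk bdd])
  have lim: "(\<lambda>k. Fstar F (Mk k)) \<longlonglongrightarrow> ?e"
  proof (rule real_tendsto_sandwich[where h="\<lambda>k. ?e" and f="\<lambda>k. ?e - 1 / (real k + 1)"])
    show "\<forall>\<^sub>F n in sequentially. Fstar F (Mk n) \<le> ?e" using ge by simp
    show "\<forall>\<^sub>F n in sequentially. ?e - 1 / (real n + 1) \<le> Fstar F (Mk n)" using lt by (simp add: less_imp_le)
    show "(\<lambda>k. ?e) \<longlonglongrightarrow> ?e" by simp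
    have "(\<lambda>k. 1 / (real k + 1)) \<longlonglongrightarrow> 0" using LIMSEQ_inverse_real_of_nat by (simp add: inverse_eq_divide add.commute)
    then show "(\<lambda>k. ?e - 1 / (real k + 1)) \<longlonglongrightarrow> ?e" using tendsto_diff[of "\<lambda>k. ?e" ?e sequentially] by fastforce
  qed
  obtain r M where r: "strict_mono r" and M: "M \<in> invariant_measures T"
    and wc: "\<And>h::'a\<Rightarrow>real. continuous_on UNIV h \<Longrightarrow> (\<lambda>k. \<integral>x. h x \<partial>Mk (r k)) \<longlonglongrightarrow> (\<integral>x. h x \<partial>M)"
    using weak_compact_inv[where Mk=Mk, OF cpt cT Mk] by blast
  have "(\<lambda>k. Fstar F (Mk (r k))) \<longlonglongrightarrow> Fstar F M"
    by (rule Fstar_weak_cont[OF cpt cT A _ M wc]) (use Mk in auto)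
  moreover have "(\<lambda>k. Fstar F (Mk (r k))) \<longlonglongrightarrow> ?e"
    using LIMSEQ_subseq_LIMSEQ[OF lim r] by (simp add: comp_def)
  ultimately have "Fstar F M = ?e" by (rule LIMSEQ_unique)
  then show ?thesis using M by blast
qed

lemma comb_between:
  fixes T :: "'a::metric_space \<Rightarrow> 'a"
  assumes cpt: "compact (UNIV::'a set)" and cT: "continuous_on UNIV T"
    and AF: "AAP T F" and AP: "AAP T \<Phi>"
    and mu: "\<mu> \<in> invariant_measures T" and opt: "Fstar F \<mu> = beta T F"
    and N: "N \<in> invariant_measures T"
    and a: "min (Fstar \<Phi> \<mu>) (Fstar \<Phi> N) \<le> a" "a \<le> max (Fstar \<Phi> \<mu>) (Fstar \<Phi> N)"
  shows "\<exists>N'\<in>invariant_measures T. Fstar \<Phi> N' = a \<and> Fstar F N \<le> Fstar F N'"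
proof (cases "Fstar \<Phi> N = Fstar \<Phi> \<mu>")
  case True
  then show ?thesis using a N by (intro bexI[of _ N]) auto
next
  case False
  let ?b = "Fstar \<Phi> N" and ?c = "Fstar \<Phi> \<mu>"
  define t where "t = (a - ?c) / (?b - ?c)"
  have t: "0 \<le> t" "t \<le> 1"
  proof -
    have "?b < ?c \<or> ?c < ?b" using False by linarith
    then show "0 \<le> t" "t \<le> 1" using a unfolding t_def by (auto simp: field_simps)
  qed
  obtain B where B: "\<And>N. N\<in>invariant_measures T \<Longrightarrow> \<bar>Fstar F N\<bar> \<le> B"
    using Fstar_bounded[OF cpt cT AF] by blast
  have bdd: "bdd_above (Fstar F ` invariant_measures T)"
    using B by (intro bdd_aboveI[where M="B"]) (force simp: abs_le_iff)
  have le: "Fstar F N \<le> Fstar F \<mu>" unfolding opt beta_def by (rule cSUP_upper[OF N bdd])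
  let ?N = "comb t N \<mu>"
  have in1: "?N \<in> invariant_measures T" by (rule comb_inv[OF cT t N mu])
  have "Fstar \<Phi> ?N = t * ?b + (1 - t) * ?c" by (rule Fstar_comb[OF cpt cT AP t N mu])
  also have "\<dots> = a"
  proof -
    have nz: "?b - ?c \<noteq> 0" using False by simp
    have "t * ?b - t * ?c = t * (?b - ?c)" by (simp add: algebra_simps)
    also have "\<dots> = a - ?c" using nz unfolding t_def by simp
    finally have h: "t * ?b - t * ?c = a - ?c" .
    have "(1 - t) * ?c = ?c - t * ?c" by (simp add: algebra_simps)
    then show ?thesis using h by linarith
  qed
  finally have e1: "Fstar \<Phi> ?N = a" .
  have "Fstar F ?N = t * Fstar F N + (1 - t) * Fstar F \<mu>" by (rule Fstar_comb[OF cpt cT AF t N mu])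
  also have "\<dots> \<ge> t * Fstar F N + (1 - t) * Fstar F N"
    using le t by (intro add_left_mono mult_left_mono) auto
  finally have "Fstar F N \<le> Fstar F ?N" by (simp add: algebra_simps)
  then show ?thesis using e1 in1 by blast
qed

theorem theoremB:
  fixes T :: "'a::metric_space \<Rightarrow> 'a"
    and F \<Phi> :: "nat \<Rightarrow> 'a \<Rightarrow> real"
    and \<mu> :: "'a measure"
  assumes "compact (UNIV :: 'a set)"
    and "continuous_on UNIV T"
    and "AAP T F" and "AAP T \<Phi>"
    and "\<mu> \<in> ergodic_measures T"
    and "Fstar F \<mu> = beta T F"
  shows "mono_on {eta T \<Phi> .. Fstar \<Phi> \<mu>} (Lambda T F \<Phi>)
    \<and> antimono_on {Fstar \<Phi> \<mu> .. beta T \<Phi>} (Lambda T F \<Phi>)"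
proof -
  note cpt = assms(1) and cT = assms(2) and AF = assms(3) and AP = assms(4) and opt = assms(6)
  have mu: "\<mu> \<in> invariant_measures T" using assms(5) by (simp add: ergodic_measures_def)
  then have ne: "invariant_measures T \<noteq> {}" by blast
  obtain Nmin where Nmin: "Nmin \<in> invariant_measures T" "Fstar \<Phi> Nmin = eta T \<Phi>"
    using attain_inf[OF cpt cT AP ne] by blast
  obtain Nmax where Nmax: "Nmax \<in> invariant_measures T" "Fstar \<Phi> Nmax = beta T \<Phi>"
    using attain_sup[OF cpt cT AP ne] by blast
  obtain B where B: "\<And>N. N\<in>invariant_measures T \<Longrightarrow> \<bar>Fstar F N\<bar> \<le> B"
    using Fstar_bounded[OF cpt cT AF] by blast
  have bddL: "bdd_above (Fstar F ` level_measures T \<Phi> a)" for a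
    using B by (intro bdd_aboveI[where M="B"]) (force simp: abs_le_iff level_measures_def)
  let ?c = "Fstar \<Phi> \<mu>"
  have key: "Lambda T F \<Phi> a1 \<le> Lambda T F \<Phi> a2"
    if N0: "N0 \<in> level_measures T \<Phi> a1"
      and betw: "\<And>N. N \<in> level_measures T \<Phi> a1 \<Longrightarrow> min ?c (Fstar \<Phi> N) \<le> a2 \<and> a2 \<le> max ?c (Fstar \<Phi> N)"
    for a1 a2 N0
    unfolding Lambda_def
  proof (rule cSUP_least)
    show "level_measures T \<Phi> a1 \<noteq> {}" using N0 by blast
    fix N assume N: "N \<in> level_measures T \<Phi> a1"
    then have Ni: "N \<in> invariant_measures T" by (simp add: level_measures_def)
    obtain N' where N': "N' \<in> invariant_measures T" "Fstar \<Phi> N' = a2" "Fstar F N \<le> Fstar F N'"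
      using comb_between[OF cpt cT AF AP mu opt Ni] betw[OF N] by blast
    then have "N' \<in> level_measures T \<Phi> a2" by (simp add: level_measures_def)
    then have "Fstar F N' \<le> (SUP M\<in>level_measures T \<Phi> a2. Fstar F M)" by (rule cSUP_upper[OF _ bddL])
    then show "Fstar F N \<le> (SUP M\<in>level_measures T \<Phi> a2. Fstar F M)" using N' by linarith
  qed
  have nonempty: "\<exists>N. N \<in> level_measures T \<Phi> a"
    if h1: "min ?c (Fstar \<Phi> Nx) \<le> a" and h2: "a \<le> max ?c (Fstar \<Phi> Nx)" and h3: "Nx \<in> invariant_measures T" for a Nx
  proof -
    obtain N' where "N' \<in> invariant_measures T" "Fstar \<Phi> N' = a"
      using comb_between[OF cpt cT AF AP mu opt h3 h1 h2] by blast
    then show ?thesis by (auto simp: level_measures_def)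
  qed
  have "mono_on {eta T \<Phi> .. ?c} (Lambda T F \<Phi>)"
  proof (rule mono_onI)
    fix r s assume r: "r \<in> {eta T \<Phi> .. ?c}" and s: "s \<in> {eta T \<Phi> .. ?c}" and rs: "r \<le> s"
    obtain N0 where N0: "N0 \<in> level_measures T \<Phi> r"
      using nonempty[where a=r and Nx=Nmin] Nmin r by auto
    show "Lambda T F \<Phi> r \<le> Lambda T F \<Phi> s"
      by (rule key[OF N0]) (use rs s in \<open>auto simp: level_measures_def\<close>)
  qed
  moreover have "antimono_on {?c .. beta T \<Phi>} (Lambda T F \<Phi>)"
  proof (rule monotone_onI)
    fix r s assume r: "r \<in> {?c .. beta T \<Phi>}" and s: "s \<in> {?c .. beta T \<Phi>}" and rs: "r \<le> s"
    obtain N0 where N0: "N0 \<in> level_measures T \<Phi> s"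
      using nonempty[where a=s and Nx=Nmax] Nmax s by auto
    show "Lambda T F \<Phi> s \<le> Lambda T F \<Phi> r"
      by (rule key[OF N0]) (use rs r in \<open>auto simp: level_measures_def\<close>)
  qed
  ultimately show ?thesis by blast
qed

end
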